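(* Let $\lambda \geq 2$ be an integer. Then there exists a positive integer $p''(\lambda)$ such that, with $p = p''(\lambda)$, each of the following three graphs has smallest adjacency eigenvalue less than $-\lambda$: (i) the graph consisting of $\lambda+1$ pairwise disjoint and mutually non-adjacent cliques $K_p$ together with one extra vertex adjacent to all vertices of these cliques; (ii) the graph consisting of two adjacent vertices $s$ and $s'$ and $\lambda+1$ pairwise disjoint, mutually non-adjacent cliques $Q_1,\dots,Q_{\lambda+1}$, each a $K_p$, where $s$ is adjacent to all vertices of $Q_1,\dots,Q_\lambda$ and to none of $Q_{\lambda+1}$, and $s'$ is adjacent to all vertices of $Q_{\lambda+1}$ and to none of $Q_1,\dots,Q_\lambda$; (iii) the graph consisting of a complete graph $K_{n+1}$ with $n = \lambda^2-\lambda+1$, together with a clique $K_p$ on $p$ new vertices, each of which is adjacent to exactly the same $n$ fixed vertices of the $K_{n+1}$ (and not to the remaining vertex).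
   Context: The smallest eigenvalue of a graph refers to the smallest eigenvalue of its adjacency matrix. In the paper these graphs are $G(\mathfrak{h}^{(\lambda+1)},p)$, $G(\mathfrak{h}^{(\lambda,1)},p)$ and $G(\mathfrak{c}_{\lambda^2-\lambda+1},p)$, obtained from Hoffman graphs by replacing each fat vertex by a clique $K_p$ joined to all slim neighbours of that fat vertex. *)

theory Defs
  imports "Jordan_Normal_Form.Char_Poly"
begin

definition adj_matrix :: "nat \<Rightarrow> (nat \<Rightarrow> nat \<Rightarrow> bool) \<Rightarrow> real mat" where
  "adj_matrix N E = mat N N (\<lambda>(i,j). if E i j then 1 else 0)"

definition smallest_eigenvalue :: "real mat \<Rightarrow> real" where
  "smallest_eigenvalue A = Min {\<mu>. eigenvalue A \<mu>}"

text \<open>(i): lam+1 disjoint cliques K_p on vertices 0..<(lam+1)p (vertex v lies in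
  clique v div p), plus vertex (lam+1)p adjacent to all of them.\<close>
definition adj1 :: "nat \<Rightarrow> nat \<Rightarrow> nat \<Rightarrow> nat \<Rightarrow> bool" where
  "adj1 lam p i j = (let M = (lam+1)*p in
     i \<noteq> j \<and> ((i < M \<and> j < M \<and> i div p = j div p) \<or> (i = M \<and> j < M) \<or> (j = M \<and> i < M)))"

definition graph1 :: "nat \<Rightarrow> nat \<Rightarrow> real mat" where
  "graph1 lam p = adj_matrix ((lam+1)*p + 1) (adj1 lam p)"

text \<open>(ii): cliques Q_1..Q_(lam+1) on vertices 0..<(lam+1)p (Q_(k+1) = vertices with
  div p = k), s = (lam+1)p, s' = (lam+1)p+1; s ~ s', s ~ Q_1..Q_lam (vertices < lam p),
  s' ~ Q_(lam+1) (vertices lam p ..< (lam+1)p).\<close>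
definition adj2 :: "nat \<Rightarrow> nat \<Rightarrow> nat \<Rightarrow> nat \<Rightarrow> bool" where
  "adj2 lam p i j = (let M = (lam+1)*p; s = M; s' = M+1;
     E = (\<lambda>a b. (a < M \<and> b < M \<and> a div p = b div p)
               \<or> (a = s \<and> b = s')
               \<or> (a = s \<and> b < lam*p)
               \<or> (a = s' \<and> lam*p \<le> b \<and> b < M))
     in i \<noteq> j \<and> (E i j \<or> E j i))"

definition graph2 :: "nat \<Rightarrow> nat \<Rightarrow> real mat" where
  "graph2 lam p = adj_matrix ((lam+1)*p + 2) (adj2 lam p)"

text \<open>(iii): K_(n+1) on vertices 0..n, clique K_p on vertices n+1..n+p, each of which
  is adjacent to vertices 0..n-1 (not to vertex n); n = lam^2-lam+1.\<close>
definition adj3 :: "nat \<Rightarrow> nat \<Rightarrow> nat \<Rightarrow> nat \<Rightarrow> bool" where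
  "adj3 lam p i j = (let n = lam^2 - lam + 1 in
     i \<noteq> j \<and> ((i \<le> n \<and> j \<le> n) \<or> (n < i \<and> n < j) \<or> (i < n \<and> n < j) \<or> (j < n \<and> n < i)))"

definition graph3 :: "nat \<Rightarrow> nat \<Rightarrow> real mat" where
  "graph3 lam p = adj_matrix ((lam^2 - lam + 1) + 1 + p) (adj3 lam p)"

end

theory Submission imports Defs begin

lemma ev_le:
  fixes E :: "nat \<Rightarrow> nat \<Rightarrow> bool" and f :: "nat \<Rightarrow> real"
  assumes eq: "\<And>i. i < N \<Longrightarrow> (\<Sum>j\<in>{j. j<N \<and> E i j}. f j) = \<mu> * f i"
    and nz: "z < N" "f z \<noteq> 0"
  shows "smallest_eigenvalue (adj_matrix N E) \<le> \<mu>"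
proof -
  let ?A = "adj_matrix N E"
  have A: "?A \<in> carrier_mat N N" unfolding adj_matrix_def by simp
  define v where "v = vec N f"
  have "?A *\<^sub>v v = \<mu> \<cdot>\<^sub>v v"
  proof (rule eq_vecI)
    fix i assume i: "i < dim_vec (\<mu> \<cdot>\<^sub>v v)"
    hence iN: "i < N" by (simp add: v_def)
    have "(?A *\<^sub>v v) $ i = (\<Sum>j<N. (if E i j then 1 else 0) * f j)"
      using iN unfolding adj_matrix_def v_def
      by (simp add: scalar_prod_def lessThan_atLeast0)
    also have "\<dots> = (\<Sum>j\<in>{j. j<N \<and> E i j}. f j)"
    proof -
      have "(\<Sum>j<N. (if E i j then 1 else 0) * f j) = (\<Sum>j<N. if E i j then f j else 0)"
        by (intro sum.cong) auto
      also have "\<dots> = (\<Sum>j\<in>{j\<in>{..<N}. E i j}. f j)" by (rule sum.inter_filter[symmetric]) simp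
      finally show ?thesis by simp
    qed
    also have "\<dots> = (\<mu> \<cdot>\<^sub>v v) $ i" using eq[OF iN] iN by (simp add: v_def)
    finally show "(?A *\<^sub>v v) $ i = (\<mu> \<cdot>\<^sub>v v) $ i" .
  qed (simp add: v_def adj_matrix_def)
  moreover have "v \<noteq> 0\<^sub>v N" using nz by (auto simp: v_def vec_eq_iff)
  ultimately have ev: "eigenvalue ?A \<mu>"
    unfolding eigenvalue_def eigenvector_def using A by (intro exI[of _ v]) (auto simp: v_def)
  have "char_poly ?A \<noteq> 0" using degree_monic_char_poly[OF A] by auto
  hence fin: "finite {x. poly (char_poly ?A) x = 0}" by (rule poly_roots_finite)
  have "{x. eigenvalue ?A x} = {x. poly (char_poly ?A) x = 0}"
    using eigenvalue_root_char_poly[OF A] by auto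
  with fin have "finite {x. eigenvalue ?A x}" by simp
  thus ?thesis unfolding smallest_eigenvalue_def using ev by (simp add: Min_le)
qed


lemma div_eq_iff_range:
  fixes j k p :: nat assumes "p > 0"
  shows "(j div p = k) \<longleftrightarrow> (k*p \<le> j \<and> j < k*p+p)"
  by (metis add.commute assms div_nat_eqI div_times_less_eq_dividend
    dividend_less_div_times mult.commute mult_Suc)

lemma div_lt_bound:
  fixes j k p :: nat assumes "p > 0"
  shows "(j div p < k) \<longleftrightarrow> j < k*p"
  by (simp add: assms div_less_iff_less_mult)

lemma block_sum:
  fixes p k i :: nat and c :: real
  assumes "p > 0" "i div p = k"
  shows "(\<Sum>j\<in>{k*p..<k*p+p} - {i}. c) = (real p - 1) * c"
proof -
  have "i \<in> {k*p..<k*p+p}" using assms div_eq_iff_range by auto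
  hence "card ({k*p..<k*p+p} - {i}) = p - 1" by simp
  thus ?thesis using assms(1) by (simp add: of_nat_diff)
qed

lemma graph1_le:
  fixes L p :: nat and \<mu> :: real
  assumes p: "p > 0" and q: "\<mu>^2 - (real p - 1)*\<mu> - (real L + 1)*real p = 0"
  shows "smallest_eigenvalue (graph1 L p) \<le> \<mu>"
proof -
  define M where "M = (L+1)*p"
  define \<beta> where "\<beta> = \<mu> - (real p - 1)"
  define f where "f = (\<lambda>j::nat. if j < M then 1 else \<beta>)"
  have "smallest_eigenvalue (adj_matrix (M+1) (adj1 L p)) \<le> \<mu>"
  proof (rule ev_le[where f = f and z = 0])
    fix i assume i: "i < M + 1"
    show "(\<Sum>j\<in>{j. j<M+1 \<and> adj1 L p i j}. f j) = \<mu> * f i"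
    proof (cases "i < M")
      case True
      define k where "k = i div p"
      have kL: "k < L + 1" using True p unfolding k_def M_def by (simp add: div_lt_bound)
      have kb: "j < M" if "k*p \<le> j" "j < k*p+p" for j
      proof -
        have "k*p + p \<le> (L+1)*p" using kL by (metis add.commute mult_Suc mult_le_mono1 Suc_leI Suc_eq_plus1)
        thus ?thesis using that M_def by linarith
      qed
      have kb': "j < Suc M" if "k*p \<le> j" "j < k*p+p" for j using kb[OF that] by simp
      have S: "{j. j<M+1 \<and> adj1 L p i j} = ({k*p..<k*p+p} - {i}) \<union> {M}"
      proof -
        have key: "\<And>j. (j div p = i div p) = (k*p \<le> j \<and> j < k*p+p)"
          using div_eq_iff_range[OF p] k_def by simp
        have key2: "\<And>j. (i div p = j div p) = (k*p \<le> j \<and> j < k*p+p)"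
          using key by metis
        show ?thesis using True p unfolding adj1_def Let_def M_def[symmetric]
          by (auto simp: key key2 dest: kb kb')
      qed
      have "(\<Sum>j\<in>{j. j<M+1 \<and> adj1 L p i j}. f j) = (\<Sum>j\<in>{k*p..<k*p+p} - {i}. f j) + f M"
        unfolding S by (subst sum.union_disjoint) (auto dest: kb)
      also have "(\<Sum>j\<in>{k*p..<k*p+p} - {i}. f j) = (\<Sum>j\<in>{k*p..<k*p+p} - {i}. 1)"
      proof (rule sum.cong)
        fix j assume "j \<in> {k*p..<k*p+p} - {i}"
        hence "j div p = k" using div_eq_iff_range[OF p] by auto
        hence "j < M" using kL p unfolding M_def by (metis div_lt_bound)
        thus "f j = 1" by (simp add: f_def)
      qed simp
      also have "\<dots> = real p - 1" using block_sum[OF p, of i k 1] k_def by simp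
      finally show ?thesis using True by (simp add: f_def \<beta>_def)
    next
      case False
      hence iM: "i = M" using i by simp
      have S: "{j. j<M+1 \<and> adj1 L p i j} = {..<M}"
        using iM unfolding adj1_def Let_def M_def[symmetric] by auto
      have "(\<Sum>j\<in>{j. j<M+1 \<and> adj1 L p i j}. f j) = (\<Sum>j<M. 1)"
        unfolding S by (rule sum.cong) (auto simp: f_def)
      also have "\<dots> = (real L + 1) * real p" by (simp add: M_def algebra_simps)
      also have "\<dots> = \<mu> * \<beta>" using q unfolding \<beta>_def by (simp add: power2_eq_square algebra_simps)
      finally show ?thesis using iM by (simp add: f_def)
    qed
  next
    show "0 < M + 1" by simp
    show "f 0 \<noteq> 0" using p by (simp add: f_def M_def)
  qed
  thus ?thesis unfolding graph1_def M_def .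
qed


lemma graph3_le:
  fixes L p :: nat and \<mu> :: real
  assumes p: "p > 0" and mu0: "\<mu> \<noteq> 0" and mup: "\<mu> \<noteq> real p - 1"
    and q: "(real (L^2 - L + 1) - 1) + real (L^2 - L + 1) / \<mu>
             + real p * real (L^2 - L + 1) / (\<mu> - (real p - 1)) = \<mu>"
  shows "smallest_eigenvalue (graph3 L p) \<le> \<mu>"
proof -
  define n where "n = L^2 - L + 1"
  have n1: "n \<ge> 1" by (simp add: n_def)
  define N where "N = n + 1 + p"
  define b where "b = real n / \<mu>"
  define c where "c = real n / (\<mu> - (real p - 1))"
  define f where "f = (\<lambda>j::nat. if j < n then 1 else if j = n then b else c)"
  have sc: "(\<Sum>j\<in>A. f j) = real (card A) * c" if "A \<subseteq> {n+1..<N}" for A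
  proof -
    have "(\<Sum>j\<in>A. f j) = (\<Sum>j\<in>A. c)" using that by (intro sum.cong) (auto simp: f_def)
    thus ?thesis by simp
  qed
  have s1: "(\<Sum>j\<in>A. f j) = real (card A)" if "A \<subseteq> {..<n}" for A
  proof -
    have "(\<Sum>j\<in>A. f j) = (\<Sum>j\<in>A. 1)" using that by (intro sum.cong) (auto simp: f_def)
    thus ?thesis by simp
  qed
  have "smallest_eigenvalue (adj_matrix N (adj3 L p)) \<le> \<mu>"
  proof (rule ev_le[where f = f and z = 0])
    fix i assume i: "i < N"
    show "(\<Sum>j\<in>{j. j<N \<and> adj3 L p i j}. f j) = \<mu> * f i"
    proof -
      consider "i < n" | "i = n" | "n < i" by linarith
      then show ?thesis
      proof cases
        case 1
        have S: "{j. j<N \<and> adj3 L p i j} = (({..<n} - {i}) \<union> {n}) \<union> {n+1..<N}"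
          using 1 unfolding adj3_def Let_def n_def[symmetric] N_def by auto
        have "(\<Sum>j\<in>{j. j<N \<and> adj3 L p i j}. f j) = (real n - 1) + b + real p * c"
          unfolding S using 1
          apply (subst sum.union_disjoint, simp, simp, force)
          apply (subst sum.union_disjoint, simp, simp, force)
          apply (subst s1, force)
          apply (subst sc, force)
          apply (simp add: f_def N_def of_nat_diff)
          done
        also have "\<dots> = \<mu>" using q unfolding b_def c_def n_def by simp
        finally show ?thesis using 1 by (simp add: f_def)
      next
        case 2
        have S: "{j. j<N \<and> adj3 L p i j} = {..<n}"
          using 2 unfolding adj3_def Let_def n_def[symmetric] N_def by auto
        have "(\<Sum>j\<in>{j. j<N \<and> adj3 L p i j}. f j) = real n"
          unfolding S by (subst s1) auto
        also have "\<dots> = \<mu> * b" using mu0 by (simp add: b_def)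
        finally show ?thesis using 2 by (simp add: f_def)
      next
        case 3
        have S: "{j. j<N \<and> adj3 L p i j} = ({n+1..<N} - {i}) \<union> {..<n}"
          using 3 i unfolding adj3_def Let_def n_def[symmetric] N_def by auto
        have "(\<Sum>j\<in>{j. j<N \<and> adj3 L p i j}. f j) = (real p - 1) * c + real n"
          unfolding S using 3 i
          apply (subst sum.union_disjoint, simp, simp, force)
          apply (subst s1, force)
          apply (subst sc, force)
          apply (simp add: N_def of_nat_diff)
          done
        also have "\<dots> = \<mu> * c"
        proof -
          have "\<mu> - (real p - 1) \<noteq> 0" using mup by simp
          thus ?thesis unfolding c_def by (simp add: field_simps)
        qed
        finally show ?thesis using 3 by (simp add: f_def)
      qed
    qed
  next
    show "0 < N" by (simp add: N_def)
    show "f 0 \<noteq> 0" using n1 by (simp add: f_def)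
  qed
  thus ?thesis unfolding graph3_def N_def n_def .
qed


lemma graph2_le:
  fixes L p :: nat and \<mu> :: real
  assumes p: "p > 0"
    and q0: "\<mu> - (real p - 1) \<noteq> 0"
    and q: "(\<mu> - (real p - 1))^2 = (\<mu> * (\<mu> - (real p - 1)) - real L * real p)
                                   * (\<mu> * (\<mu> - (real p - 1)) - real p)"
  shows "smallest_eigenvalue (graph2 L p) \<le> \<mu>"
proof -
  define M where "M = (L+1)*p"
  have hML: "M = L*p + p" by (simp add: M_def)
  define b where "b = \<mu> - (real p - 1)"
  define c where "c = \<mu> * b - real L * real p"
  define d where "d = c / b"
  define f where "f = (\<lambda>j::nat. if j < L*p then 1 else if j < M then d else if j = M then b else c)"
  have b0: "b \<noteq> 0" using q0 by (simp add: b_def)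
  have qq: "b^2 = c * (\<mu> * b - real p)" using q unfolding b_def c_def .
  have s1: "(\<Sum>j\<in>A. f j) = real (card A)" if "A \<subseteq> {..<L*p}" for A
  proof -
    have "(\<Sum>j\<in>A. f j) = (\<Sum>j\<in>A. 1)" using that by (intro sum.cong) (auto simp: f_def)
    thus ?thesis by simp
  qed
  have sd: "(\<Sum>j\<in>A. f j) = real (card A) * d" if "A \<subseteq> {L*p..<M}" for A
  proof -
    have "(\<Sum>j\<in>A. f j) = (\<Sum>j\<in>A. d)" using that by (intro sum.cong) (auto simp: f_def)
    thus ?thesis by simp
  qed
  have "smallest_eigenvalue (adj_matrix (M+2) (adj2 L p)) \<le> \<mu>"
  proof (rule ev_le[where f = f and z = M])
    fix i assume i: "i < M + 2"
    show "(\<Sum>j\<in>{j. j<M+2 \<and> adj2 L p i j}. f j) = \<mu> * f i"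
    proof -
      consider "i < L*p" | "L*p \<le> i" "i < M" | "i = M" | "i = M+1" using i by linarith
      then show ?thesis
      proof cases
        case 1
        define k where "k = i div p"
        have kL: "k < L" using 1 p unfolding k_def by (simp add: div_lt_bound)
        have kb: "j < L*p" if "k*p \<le> j" "j < k*p+p" for j
        proof -
          have "k*p + p \<le> L*p" using kL by (metis add.commute mult_Suc mult_le_mono1 Suc_leI)
          thus ?thesis using that by linarith
        qed
        have kb': "j < M" "j < Suc (Suc M)" "j \<noteq> M" "j \<noteq> Suc M" if "k*p \<le> j" "j < k*p+p" for j
          using kb[OF that] hML by auto
        have key: "\<And>j. (j div p = i div p) = (k*p \<le> j \<and> j < k*p+p)"
          using div_eq_iff_range[OF p] k_def by simp
        have key2: "\<And>j. (i div p = j div p) = (k*p \<le> j \<and> j < k*p+p)"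
          using key by metis
        have S: "{j. j<M+2 \<and> adj2 L p i j} = ({k*p..<k*p+p} - {i}) \<union> {M}"
          using 1 p hML unfolding adj2_def Let_def M_def[symmetric]
          by (auto simp: key key2 dest: kb')
        have "(\<Sum>j\<in>{j. j<M+2 \<and> adj2 L p i j}. f j) = (real p - 1) + b"
          unfolding S
          apply (subst sum.union_disjoint, simp, simp, force dest: kb')
          apply (subst s1, force dest: kb)
          using block_sum[OF p, of i k 1] k_def hML p
          apply (simp add: f_def)
          done
        also have "\<dots> = \<mu>" by (simp add: b_def)
        finally show ?thesis using 1 by (simp add: f_def)
      next
        case 2
        have kL: "i div p = L" using 2 p hML div_eq_iff_range[OF p] by simp
        have key: "\<And>j. (j div p = i div p) = (L*p \<le> j \<and> j < M)"
          unfolding kL using div_eq_iff_range[OF p, of _ L] hML by simp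
        have key2: "\<And>j. (i div p = j div p) = (L*p \<le> j \<and> j < M)"
          using key by metis
        have S: "{j. j<M+2 \<and> adj2 L p i j} = ({L*p..<M} - {i}) \<union> {M+1}"
          using 2 p hML unfolding adj2_def Let_def M_def[symmetric]
          by (auto simp: key key2)
        have "(\<Sum>j\<in>{j. j<M+2 \<and> adj2 L p i j}. f j) = (real p - 1) * d + c"
          unfolding S using 2
          apply (subst sum.union_disjoint, simp, simp, simp)
          apply (subst sd, force)
          apply (simp add: f_def hML of_nat_diff)
          done
        also have "\<dots> = \<mu> * d" using b0 unfolding d_def b_def by (simp add: field_simps)
        finally show ?thesis using 2 by (simp add: f_def)
      next
        case 3
        have S: "{j. j<M+2 \<and> adj2 L p i j} = {..<L*p} \<union> {M+1}"
          using 3 p hML unfolding adj2_def Let_def M_def[symmetric] by auto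
        have "(\<Sum>j\<in>{j. j<M+2 \<and> adj2 L p i j}. f j) = real L * real p + c"
          unfolding S using 3 hML
          apply (subst sum.union_disjoint, simp, simp, simp)
          apply (subst s1, force)
          apply (simp add: f_def)
          done
        also have "\<dots> = \<mu> * b" by (simp add: c_def)
        finally show ?thesis using 3 hML by (simp add: f_def)
      next
        case 4
        have S: "{j. j<M+2 \<and> adj2 L p i j} = {L*p..<M} \<union> {M}"
          using 4 p hML unfolding adj2_def Let_def M_def[symmetric] by auto
        have "(\<Sum>j\<in>{j. j<M+2 \<and> adj2 L p i j}. f j) = real p * d + b"
          unfolding S using 4 hML
          apply (subst sum.union_disjoint, simp, simp, simp)
          apply (subst sd, force)
          apply (simp add: f_def)
          done
        also have "\<dots> = \<mu> * c"
        proof -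
          have "real p * d + b = (real p * c + b^2) / b" using b0 unfolding d_def
            by (simp add: field_simps power2_eq_square)
          also have "\<dots> = (\<mu> * b * c) / b" using qq by (simp add: algebra_simps)
          also have "\<dots> = \<mu> * c" using b0 by simp
          finally show ?thesis .
        qed
        finally show ?thesis using 4 hML by (simp add: f_def)
      qed
    qed
  next
    show "M < M + 2" by simp
    show "f M \<noteq> 0" using p b0 hML by (simp add: f_def)
  qed
  thus ?thesis unfolding graph2_def M_def .
qed


lemma quad_root:
  fixes B C t :: real
  assumes "t^2 - B*t - C < 0"
  shows "\<exists>r. r < t \<and> r^2 - B*r - C = 0"
proof -
  define D where "D = B^2 + 4*C"
  have D: "(B - 2*t)^2 < D" using assms unfolding D_def by (simp add: power2_eq_square algebra_simps)
  hence D0: "D \<ge> 0" by (smt (verit) zero_le_power2)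
  have "\<bar>B - 2*t\<bar> < sqrt D" using D by (metis real_sqrt_abs real_sqrt_less_iff)
  hence "B - sqrt D < 2*t" using abs_ge_self[of "B-2*t"] by linarith
  hence lt: "(B - sqrt D)/2 < t" by (simp add: field_simps)
  have id: "((B - s)/2)^2 - B*((B - s)/2) - C = (s^2 - D)/4" for s
    unfolding D_def by (simp add: power2_eq_square field_simps)
  have "((B - sqrt D)/2)^2 - B*((B - sqrt D)/2) - C = 0" using id[of "sqrt D"] D0 by simp
  thus ?thesis using lt by blast
qed

lemma ineqA2:
  fixes L P :: real assumes L: "L \<ge> 2" and P: "P = 2*L^4"
  shows "L*(L-1)^2*(L+P) < (L+P-1)^2"
proof -
  define X where "X = L+P-1"
  have L3: "L^3 \<ge> 8" using L power_mono[of 2 L 3] by simp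
  have L4: "L^4 = L * L^3" by (simp add: power_numeral_reduce)
  have "L * L^3 \<ge> 2 * L^3" using mult_right_mono[OF L, of "L^3"] L3 L by simp
  hence X: "X > 2*L^3" unfolding X_def P L4 using L L3 by linarith
  have a: "(L-1)^2 \<le> L^2" using L power_mono[of "L-1" L 2] by simp
  have a2: "L*(L-1)^2 \<le> L^3" using mult_left_mono[OF a, of L] L by (simp add: power_numeral_reduce)
  have b: "L*(L-1)^2*(L+P) \<le> L^3 * (X+1)" using mult_right_mono[OF a2, of "L+P"] L P unfolding X_def by simp
  also have "\<dots> \<le> L^3 * (2*X)" using X L3 L by (intro mult_left_mono) auto
  also have "\<dots> = (2*L^3) * X" by simp
  also have "\<dots> < X * X" using X L3 by (intro mult_strict_right_mono) auto
  finally show ?thesis unfolding X_def by (simp add: power2_eq_square)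
qed

lemma ineqA3:
  fixes L P :: real assumes L: "L \<ge> 2" and P: "P = 2*L^4"
  shows "((-P)*(-P-P+1) - L*P)*((-P)*(-P-P+1) - P) - (-P-P+1)^2 > 0"
proof -
  have L3: "L^3 \<ge> 8" using L power_mono[of 2 L 3] by simp
  have L4: "L^4 = L * L^3" by (simp add: power_numeral_reduce)
  have "L * L^3 \<ge> L * 8" using mult_left_mono[OF L3, of L] L by simp
  hence PL: "P \<ge> 16 * L" unfolding P L4 using L L3 by linarith
  have e1: "(-P)*(-P-P+1) - L*P = P*(2*P-1-L)" by (simp add: algebra_simps)
  have e2: "(-P)*(-P-P+1) - P = P*(2*P-2)" by (simp add: algebra_simps)
  have f1: "P*(2*P-1-L) \<ge> P*P" using PL L by (intro mult_left_mono) auto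
  have f2: "P*(2*P-2) \<ge> P*P" using PL L by (intro mult_left_mono) auto
  have "(P*P)*(P*P) \<le> (P*(2*P-1-L))*(P*(2*P-2))" using f1 f2 PL L
    by (intro mult_mono) auto
  moreover have "(-P-P+1)^2 < (P*P)*(P*P)"
  proof -
    have "(-P-P+1)^2 = (2*P-1)^2" by (simp add: power2_eq_square algebra_simps)
    also have "\<dots> < (2*P)^2" using PL L by (intro power_strict_mono) auto
    also have "\<dots> = 4*(P*P)" by (simp add: power2_eq_square)
    also have "\<dots> < (P*P)*(P*P)"
    proof -
      have "P*P \<ge> 32*32" using PL L mult_mono[of 32 P 32 P] by simp
      thus ?thesis using mult_strict_right_mono[of 4 "P*P" "P*P"] by simp
    qed
    finally show ?thesis .
  qed
  ultimately show ?thesis unfolding e1 e2 by linarith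
qed


lemma ineqA4:
  fixes L P n r :: real assumes L: "L \<ge> 2" and P: "P = 2*L^4" and n: "n = L^2 - L + 1" and r: "r = P - 1"
  shows "(-L)*(-L-r)*(-L-n+1) - n*(-L-r) - P*n*(-L) > 0"
proof -
  have e: "(-L)*(-L-r)*(-L-n+1) - n*(-L-r) - P*n*(-L) = L^4 + 2*L^3 - 2*L^2 + 2*L - 1"
    unfolding n r P by (simp add: power2_eq_square power3_eq_cube power4_eq_xxxx algebra_simps)
  have L2: "L^2 \<ge> 4" using L power_mono[of 2 L 2] by simp
  have "L^4 = L^2 * L^2" by (simp add: power_numeral_reduce)
  hence "L^4 \<ge> 4 * L^2" using mult_right_mono[OF L2, of "L^2"] by simp
  moreover have "L^3 > 0" using L by simp
  ultimately show ?thesis unfolding e using L L2 by linarith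
qed

lemma ineqA5:
  fixes L P n r T :: real assumes L: "L \<ge> 2" and P: "P \<ge> 1" and n: "n \<ge> 1" and r: "r = P - 1"
    and T: "T = P + 2"
  shows "(-T)*(-T-r)*(-T-n+1) - n*(-T-r) - P*n*(-T) < 0"
proof -
  define A where "A = T*(T+r)"
  have A0: "A > 0" unfolding A_def T r using P by simp
  have e: "(-T)*(-T-r)*(-T-n+1) - n*(-T-r) - P*n*(-T) = -(A*(T+n-1)) + n*(T+r) + P*n*T"
    unfolding A_def by (simp add: power2_eq_square power3_eq_cube power4_eq_xxxx algebra_simps)
  have a: "A*(T+n-1) \<ge> A*n" using A0 T P by (intro mult_left_mono) auto
  have "A - T - r - P*T = P^2 + P + 1" unfolding A_def T r by (simp add: power2_eq_square power3_eq_cube power4_eq_xxxx algebra_simps)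
  hence "A - T - r - P*T > 0" using P by (smt (verit) zero_le_power2)
  hence "n * (A - T - r - P*T) > 0" using n by simp
  hence "A*n > n*(T+r) + P*n*T" by (simp add: algebra_simps)
  thus ?thesis unfolding e using a by linarith
qed


theorem mainTheorem5:
  fixes lam :: nat
  assumes "lam \<ge> 2"
  shows "\<exists>p::nat. p > 0 \<and>
           smallest_eigenvalue (graph1 lam p) < - real lam \<and>
           smallest_eigenvalue (graph2 lam p) < - real lam \<and>
           smallest_eigenvalue (graph3 lam p) < - real lam"
proof -
  define p where "p = 2 * lam^4"
  define L where "L = real lam"
  define P where "P = real p"
  have L: "L \<ge> 2" using assms unfolding L_def by simp
  have P: "P = 2*L^4" unfolding P_def p_def L_def by simp
  have p0: "p > 0" unfolding p_def using assms by simp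
  have L2: "L^2 \<ge> 4" using L power_mono[of 2 L 2] by simp
  have L4: "L^4 = L^2 * L^2" by (simp add: power_numeral_reduce)
  have L4b: "L^4 \<ge> 4 * L^2" unfolding L4 using mult_right_mono[OF L2, of "L^2"] by simp
  have P1: "P \<ge> 1" using P L4b L2 by linarith
  have "(-L)^2 - (P-1)*(-L) - (L+1)*P < 0"
  proof -
    have "(-L)^2 - (P-1)*(-L) - (L+1)*P = L^2 - L - P" by (simp add: algebra_simps power2_eq_square)
    thus ?thesis using P L4b L2 L by linarith
  qed
  then obtain m1 where m1: "m1 < -L" "m1^2 - (P-1)*m1 - (L+1)*P = 0"
    using quad_root by blast
  have g1: "smallest_eigenvalue (graph1 lam p) < - real lam"
    using graph1_le[OF p0, of m1 lam] m1 unfolding P_def L_def by simp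
  define g where "g = (\<lambda>x::real. (x*(x-(P-1)) - L*P)*(x*(x-(P-1)) - P) - (x-(P-1))^2)"
  have gP: "g (-P) \<ge> 0" using ineqA3[OF L P] unfolding g_def by (simp add: algebra_simps)
  have gL: "g (-L) < 0"
  proof -
    have "g (-L) = L*(L-1)^2*(L+P) - (L+P-1)^2" unfolding g_def by (simp add: power2_eq_square power3_eq_cube power4_eq_xxxx algebra_simps)
    thus ?thesis using ineqA2[OF L P] by linarith
  qed
  have LL: "L \<le> L^2" using L by (simp add: power2_eq_square)
  have "-P \<le> -L" using P L4b L2 L LL by linarith
  moreover have "continuous_on {-P..-L} g" unfolding g_def by (intro continuous_intros)
  ultimately obtain m2 where m2: "-P \<le> m2" "m2 \<le> -L" "g m2 = 0"
    using IVT2'[of g "-L" 0 "-P"] gP gL by auto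
  have "m2 \<noteq> -L" using m2(3) gL by auto
  hence m2L: "m2 < -L" using m2(2) by linarith
  have g2: "smallest_eigenvalue (graph2 lam p) < - real lam"
  proof -
    have "m2 - (real p - 1) \<noteq> 0" using m2L L P1 unfolding P_def by linarith
    moreover have "(m2 - (real p - 1))^2 = (m2 * (m2 - (real p - 1)) - real lam * real p)
                                   * (m2 * (m2 - (real p - 1)) - real p)"
      using m2(3) unfolding g_def P_def L_def by simp
    ultimately have "smallest_eigenvalue (graph2 lam p) \<le> m2" by (rule graph2_le[OF p0])
    thus ?thesis using m2L unfolding L_def by simp
  qed
  define n where "n = L^2 - L + 1"
  have nn: "real (lam^2 - lam + 1) = n"
  proof -
    have "lam \<le> lam^2" by (simp add: power2_eq_square)
    thus ?thesis unfolding n_def L_def by (simp add: of_nat_diff)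
  qed
  have n1: "n \<ge> 1" unfolding n_def using L L2 by (simp add: power2_eq_square)
  define r where "r = P - 1"
  define h where "h = (\<lambda>x::real. x*(x-r)*(x-n+1) - n*(x-r) - P*n*x)"
  have hL: "h (-L) > 0" using ineqA4[OF L P n_def r_def] unfolding h_def by simp
  have hT: "h (-(P+2)) < 0" using ineqA5[OF L P1 n1 r_def refl] unfolding h_def by simp
  have "-(P+2) \<le> -L" using P L4b L2 L LL by linarith
  moreover have "continuous_on {-(P+2)..-L} h" unfolding h_def by (intro continuous_intros)
  ultimately obtain m3 where m3: "-(P+2) \<le> m3" "m3 \<le> -L" "h m3 = 0"
    using IVT'[of h "-(P+2)" 0 "-L"] hL hT by auto
  have "m3 \<noteq> -L" using m3(3) hL by auto
  hence m3L: "m3 < -L" using m3(2) by linarith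
  have g3: "smallest_eigenvalue (graph3 lam p) < - real lam"
  proof -
    have m0: "m3 \<noteq> 0" using m3L L by linarith
    have mr: "m3 - r \<noteq> 0" using m3L L P1 unfolding r_def by linarith
    have "(n - 1) + n / m3 + P * n / (m3 - r) = m3"
    proof -
      have "m3 * (m3 - r) * ((n - 1) + n / m3 + P * n / (m3 - r))
            = (n-1)*m3*(m3-r) + n*(m3-r) + P*n*m3"
        using m0 mr by (simp add: field_simps)
      also have "\<dots> = m3 * (m3 - r) * m3" using m3(3) unfolding h_def by (simp add: power2_eq_square power3_eq_cube power4_eq_xxxx algebra_simps)
      finally show ?thesis using m0 mr by simp
    qed
    hence "(real (lam^2 - lam + 1) - 1) + real (lam^2 - lam + 1) / m3
             + real p * real (lam^2 - lam + 1) / (m3 - (real p - 1)) = m3"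
      unfolding nn r_def P_def .
    moreover have "m3 \<noteq> real p - 1" using mr unfolding r_def P_def by simp
    ultimately have "smallest_eigenvalue (graph3 lam p) \<le> m3"
      using graph3_le[OF p0 m0] by blast
    thus ?thesis using m3L unfolding L_def by simp
  qed
  show ?thesis using p0 g1 g2 g3 by blast
qed

end
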